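(* Let $\mathcal{A}$ be a finite totally ordered alphabet and let $\mathbf{Plax}(\mathcal{A})$ be the plactic monoid over $\mathcal{A}$. Then $\mathbf{Plax}(\mathcal{A})$ is of type 1: for every function $\sigma:\mathcal{A}\to\mathbb{N}_{\geq 2}$, the map $\phi_\sigma=\theta\times\operatorname{ev}_\sigma:\mathbf{Plax}(\mathcal{A},\sigma)\to \mathbf{Plax}(\mathcal{A},2)\times\mathbf{Com}(\mathcal{A},\sigma)$ is injective.
   Context: The plactic monoid $\mathbf{Plax}(\mathcal{A})$ is the quotient of the free monoid $\mathcal{A}^*$ by the relations $acb=cab$ for $a\le b<c$ and $bac=bca$ for $a<b\le c$ ($a,b,c\in\mathcal{A}$). For $\sigma:\mathcal{A}\to\mathbb{N}_{\geq2}$, $\mathbf{Plax}(\mathcal{A},\sigma)$ is the quotient of $\mathbf{Plax}(\mathcal{A})$ obtained by adding the relations $a^{\sigma(a)}=a$ for every $a\in\mathcal{A}$; $\mathbf{Plax}(\mathcal{A},2)$ is the case where $\sigma$ is constant equal to $2$. $\mathbf{Com}(\mathcal{A},\sigma)$ is the quotient of the free commutative monoid on $\mathcal{A}$ by the relations $a^{\sigma(a)}=a$, $a\in\mathcal{A}$. The map $\theta:\mathbf{Plax}(\mathcal{A},\sigma)\to\mathbf{Plax}(\mathcal{A},2)$ and $\operatorname{ev}_\sigma:\mathbf{Plax}(\mathcal{A},\sigma)\to\mathbf{Com}(\mathcal{A},\sigma)$ are the natural surjective morphisms (induced by the identity on $\mathcal{A}$), and $\phi_\sigma(x)=(\theta(x),\operatorname{ev}_\sigma(x))$.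 *)

theory Defs
  imports Main
begin

text \<open>A monoid presented by generators and
relations is represented by the congruence on the free monoid generated by the
defining relations; elements of the quotient are congruence classes.\<close>

inductive word_cong :: "('a list \<times> 'a list) set \<Rightarrow> 'a list \<Rightarrow> 'a list \<Rightarrow> bool"
  for R :: "('a list \<times> 'a list) set" where
  wc_rel: "(u, v) \<in> R \<Longrightarrow> word_cong R (x @ u @ y) (x @ v @ y)"
| wc_refl: "word_cong R u u"
| wc_sym: "word_cong R u v \<Longrightarrow> word_cong R v u"
| wc_trans: "word_cong R u v \<Longrightarrow> word_cong R v w \<Longrightarrow> word_cong R u w"

definition knuth_rels :: "('a::linorder list \<times> 'a list) set" where
  "knuth_rels =
     {([a, c, b], [c, a, b]) | a b c. a \<le> b \<and> b < c} \<union>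
     {([b, a, c], [b, c, a]) | a b c. a < b \<and> b \<le> c}"

definition power_rels :: "('a \<Rightarrow> nat) \<Rightarrow> ('a list \<times> 'a list) set" where
  "power_rels \<sigma> = {(replicate (\<sigma> a) a, [a]) | a. True}"

definition comm_rels :: "('a list \<times> 'a list) set" where
  "comm_rels = {([a, b], [b, a]) | a b. True}"

definition plax_sigma_eq :: "('a::linorder \<Rightarrow> nat) \<Rightarrow> 'a list \<Rightarrow> 'a list \<Rightarrow> bool" where
  "plax_sigma_eq \<sigma> = word_cong (knuth_rels \<union> power_rels \<sigma>)"

definition com_sigma_eq :: "('a \<Rightarrow> nat) \<Rightarrow> 'a list \<Rightarrow> 'a list \<Rightarrow> bool" where
  "com_sigma_eq \<sigma> = word_cong (comm_rels \<union> power_rels \<sigma>)"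

end

theory Submission
  imports Defs "HOL-Library.Multiset"
begin


lemma wc_context: "word_cong R u v \<Longrightarrow> word_cong R (x @ u @ y) (x @ v @ y)"
proof (induction rule: word_cong.induct)
  case (wc_rel u v x' y')
  then show ?case using word_cong.wc_rel[of u v R "x@x'" "y'@y"] by simp
next
  case (wc_refl u)
  then show ?case by (rule word_cong.wc_refl)
next
  case (wc_sym u v)
  then show ?case using word_cong.wc_sym by blast
next
  case (wc_trans u v w)
  then show ?case by (meson word_cong.wc_trans)
qed

declare word_cong.wc_trans[trans]

lemma wc_mono: "word_cong R u v \<Longrightarrow> R \<subseteq> R' \<Longrightarrow> word_cong R' u v"
  by (induction rule: word_cong.induct) (auto intro: word_cong.intros)

lemma wc_rel1: "(u,v) \<in> R \<Longrightarrow> word_cong R u v"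
  using word_cong.wc_rel[of u v R "[]" "[]"] by simp

lemma wc_pre: "word_cong R u v \<Longrightarrow> word_cong R (x @ u) (x @ v)"
  using wc_context[of R u v x "[]"] by simp
lemma wc_suf: "word_cong R u v \<Longrightarrow> word_cong R (u @ y) (v @ y)"
  using wc_context[of R u v "[]" y] by simp
lemma wc_cons: "word_cong R u v \<Longrightarrow> word_cong R (c # u) (c # v)"
  using wc_context[of R u v "[c]" "[]"] by simp

lemma wc_count_mod:
  assumes "word_cong R u v"
    and "\<And>l r. (l,r) \<in> R \<Longrightarrow> count (mset l) a mod m = count (mset r) a mod m"
  shows "count (mset u) a mod m = count (mset v) a mod m"
  using assms
proof (induction rule: word_cong.induct)
  case (wc_rel u v x y)
  then have "count (mset u) a mod m = count (mset v) a mod m" by blast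
  then show ?case by (simp add: mod_add_left_eq mod_add_right_eq) (metis mod_add_left_eq mod_add_right_eq add.assoc)
qed auto

abbreviation plx :: "'a::linorder list \<Rightarrow> 'a list \<Rightarrow> bool" where
  "plx \<equiv> word_cong knuth_rels"

lemma plx_mset: "plx u v \<Longrightarrow> mset u = mset v"
  by (induction rule: word_cong.induct) (auto simp: knuth_rels_def)

lemma L1: "a \<le> b \<Longrightarrow> b < c \<Longrightarrow> plx [a,c,b] [c,a,b]"
  by (rule wc_rel1) (auto simp: knuth_rels_def)
lemma L2: "a < b \<Longrightarrow> b \<le> c \<Longrightarrow> plx [b,a,c] [b,c,a]"
  by (rule wc_rel1) (auto simp: knuth_rels_def)

lemma Lpow: "s < x \<Longrightarrow> plx (replicate (Suc n) x @ [s]) (x # s # replicate n x)"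
proof (induction n)
  case 0
  then show ?case by (simp add: word_cong.wc_refl)
next
  case (Suc n)
  have "plx (replicate (Suc (Suc n)) x @ [s]) (x # x # s # replicate n x)"
    using wc_cons[OF Suc.IH[OF Suc.prems], of x] by simp
  moreover have "plx (x # x # s # replicate n x) (x # s # x # replicate n x)"
    using wc_suf[OF word_cong.wc_sym[OF L2[of s x x]], of "replicate n x"] Suc.prems by simp
  ultimately show ?case by (simp add: word_cong.wc_trans)
qed

lemma Lpow': "x < c \<Longrightarrow> plx (c # replicate (Suc n) x) (replicate n x @ [c, x])"
proof (induction n)
  case 0
  then show ?case by (simp add: word_cong.wc_refl)
next
  case (Suc n)
  have "plx (c # replicate (Suc (Suc n)) x) (x # c # replicate (Suc n) x)"
    using wc_suf[OF word_cong.wc_sym[OF L1[of x x c]], of "replicate n x"] Suc.prems by simp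
  moreover have "plx (x # c # replicate (Suc n) x) (x # replicate n x @ [c, x])"
    using wc_cons[OF Suc.IH[OF Suc.prems], of x] by simp
  ultimately show ?case by (simp add: word_cong.wc_trans replicate_app_Cons_same)
qed

lemma Ljump: "sorted (r @ [d]) \<Longrightarrow> d < c \<Longrightarrow> plx (r @ [c, d]) (c # r @ [d])"
proof (induction r arbitrary: d rule: rev_induct)
  case Nil
  then show ?case by (simp add: word_cong.wc_refl)
next
  case (snoc y r)
  have yd: "y \<le> d" using snoc.prems(1) by (simp add: sorted_append)
  have s1: "sorted (r @ [y])" using snoc.prems(1) by (simp add: sorted_append)
  have "plx (r @ [y, c, d]) (r @ [c, y, d])"
    using wc_pre[OF L1[OF yd snoc.prems(2)], of r] by simp
  moreover have "plx ((r @ [c, y]) @ [d]) ((c # r @ [y]) @ [d])"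
    using wc_suf[OF snoc.IH[OF s1], of "[d]"] yd snoc.prems(2) by simp
  ultimately show ?case by (simp add: word_cong.wc_trans)
qed


lemma LP1: "sorted r \<Longrightarrow> \<forall>x\<in>set r. x \<le> b \<Longrightarrow> b < c \<Longrightarrow> j \<le> k \<Longrightarrow>
  plx (r @ replicate j c @ replicate k b) (replicate j c @ r @ replicate k b)"
proof (induction j arbitrary: r k)
  case 0
  then show ?case by (simp add: word_cong.wc_refl)
next
  case (Suc j)
  then obtain k' where k: "k = Suc k'" by (cases k) auto
  have sr: "sorted (r @ [b])" using Suc.prems by (simp add: sorted_append)
  have "plx (r @ (replicate (Suc j) c @ [b]) @ replicate k' b) (r @ (c # b # replicate j c) @ replicate k' b)"
    using wc_context[OF Lpow[OF Suc.prems(3), of j], of r "replicate k' b"] .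
  moreover have "plx ((r @ [c, b]) @ replicate j c @ replicate k' b) ((c # r @ [b]) @ replicate j c @ replicate k' b)"
    using wc_suf[OF Ljump[OF sr Suc.prems(3)]] .
  moreover have "plx (c # ((r @ [b]) @ replicate j c @ replicate k' b)) (c # (replicate j c @ (r @ [b]) @ replicate k' b))"
    using wc_cons[OF Suc.IH[OF sr _ Suc.prems(3)]] Suc.prems k by auto
  ultimately have "plx (r @ (replicate (Suc j) c @ [b]) @ replicate k' b) (c # (replicate j c @ (r @ [b]) @ replicate k' b))"
    by (metis (no_types, lifting) append.assoc append_Cons append_Nil word_cong.wc_trans)
  then show ?case using k by (simp add: replicate_app_Cons_same)
qed

lemma Lbca: "a < b \<Longrightarrow> b \<le> c \<Longrightarrow> plx (b # replicate k c @ [a]) (b # a # replicate k c)"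
proof (cases k)
  case 0
  then show ?thesis by (simp add: word_cong.wc_refl)
next
  case (Suc k')
  assume ab: "a < b" and bc: "b \<le> c"
  have "plx (b # replicate (Suc k') c @ [a]) (b # c # a # replicate k' c)"
    using wc_cons[OF Lpow[of a c k']] ab bc by simp
  moreover have "plx (b # c # a # replicate k' c) (b # a # c # replicate k' c)"
    using wc_suf[OF word_cong.wc_sym[OF L2[OF ab bc]], of "replicate k' c"] by simp
  ultimately show ?thesis using Suc by (simp add: word_cong.wc_trans)
qed

lemma plx_eqI: "word_cong R u v \<Longrightarrow> u = u' \<Longrightarrow> v = v' \<Longrightarrow> word_cong R u' v'"
  by simp

lemma LP2: "a < b \<Longrightarrow> b \<le> c \<Longrightarrow> j \<le> i \<Longrightarrow>
  plx (replicate i b @ replicate k c @ replicate j a) (replicate i b @ replicate j a @ replicate k c)"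
proof (induction j arbitrary: i)
  case 0
  then show ?case by (simp add: word_cong.wc_refl)
next
  case (Suc j)
  then obtain i' where i: "i = Suc i'" by (cases i) auto
  have "plx (replicate (Suc i') b @ replicate k c @ replicate (Suc j) a)
             (replicate i' b @ (b # a # replicate k c) @ replicate j a)"
    by (rule plx_eqI[OF wc_context[OF Lbca[OF Suc.prems(1,2), of k], of "replicate i' b" "replicate j a"]]) (simp_all add: replicate_app_Cons_same)
  also have "plx (replicate i' b @ (b # a # replicate k c) @ replicate j a)
                 ([b,a] @ (replicate i' b @ replicate k c @ replicate j a))"
    by (rule plx_eqI[OF wc_suf[OF Lpow[of a b i']]]) (use Suc.prems in \<open>simp_all add: replicate_app_Cons_same\<close>)
  also have "plx ([b,a] @ (replicate i' b @ replicate k c @ replicate j a))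
                     ([b,a] @ (replicate i' b @ replicate j a @ replicate k c))"
  proof -
    have "plx (replicate i' b @ replicate k c @ replicate j a) (replicate i' b @ replicate j a @ replicate k c)"
      using Suc.IH[of i'] Suc.prems i by simp
    then show ?thesis using wc_pre by blast
  qed
  also have "plx ([b,a] @ (replicate i' b @ replicate j a @ replicate k c))
                 (replicate (Suc i') b @ replicate (Suc j) a @ replicate k c)"
    by (rule plx_eqI[OF wc_suf[OF word_cong.wc_sym[OF Lpow[of a b i']]]])
       (use Suc.prems in \<open>simp_all add: replicate_app_Cons_same\<close>)
  finally show ?case using i by simp
qed

lemma LB1: "sorted r \<Longrightarrow> r \<noteq> [] \<Longrightarrow> e < hd r \<Longrightarrow> plx (r @ [e]) (hd r # e # tl r)"
proof (induction r)
  case Nil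
  then show ?case by simp
next
  case (Cons c r')
  show ?case
  proof (cases r')
    case Nil
    then show ?thesis by (simp add: word_cong.wc_refl)
  next
    case (Cons c' r'')
    have ec: "e < c" and cc: "c \<le> c'" using Cons.prems Cons by auto
    have "plx (r' @ [e]) (c' # e # r'')" using Cons.IH Cons.prems Cons ec cc by auto
    then have "plx (c # r' @ [e]) (c # c' # e # r'')" by (rule wc_cons)
    moreover have "plx (c # c' # e # r'') (c # e # c' # r'')"
      using wc_suf[OF word_cong.wc_sym[OF L2[OF ec cc]], of r''] by simp
    ultimately show ?thesis using Cons by (simp add: word_cong.wc_trans)
  qed
qed

lemma LBump: "sorted r \<Longrightarrow> r \<noteq> [] \<Longrightarrow> e < last r \<Longrightarrow> \<exists>b w. plx (r @ [e]) (b # w) \<and> w \<noteq> [] \<and> hd w < b"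
proof (induction r)
  case Nil
  then show ?case by simp
next
  case (Cons c r')
  show ?case
  proof (cases "e < c")
    case True
    have "plx ((c#r') @ [e]) (c # e # r')" using LB1[OF Cons.prems(1,2)] True by simp
    then show ?thesis by (intro exI[of _ c] exI[of _ "e # r'"]) (simp add: True)
  next
    case False
    then have ce: "c \<le> e" by simp
    have r'ne: "r' \<noteq> []" using Cons.prems ce by auto
    have el: "e < last r'" using Cons.prems r'ne by simp
    obtain b w where bw: "plx (r' @ [e]) (b # w)" "w \<noteq> []" "hd w < b"
      using Cons.IH Cons.prems r'ne el by auto
    have ms: "mset (r' @ [e]) = mset (b # w)" using plx_mset[OF bw(1)] .
    have allc: "\<forall>x\<in>set (r' @ [e]). c \<le> x" using Cons.prems(1) ce by auto
    have "hd w \<in> set (b # w)" using bw(2) by simp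
    then have "hd w \<in> set (r' @ [e])" using ms by (metis set_mset_mset)
    then have ch: "c \<le> hd w" using allc by blast
    have "plx (c # r' @ [e]) (c # b # w)" using wc_cons[OF bw(1)] .
    moreover have "plx (c # b # w) (b # c # w)"
      using wc_suf[OF L1[OF ch bw(3)], of "tl w"] bw(2) by simp
    ultimately have "plx ((c # r') @ [e]) (b # c # w)" by (simp add: word_cong.wc_trans)
    then show ?thesis using ch bw(3) by fastforce
  qed
qed

lemma sorted_cons_hd: "sorted l \<Longrightarrow> l \<noteq> [] \<Longrightarrow> sorted (x # l) \<longleftrightarrow> x \<le> hd l"
  by (cases l) auto

lemma Lunsorted: "\<not> sorted y \<Longrightarrow> \<exists>r e z. y = r @ e # z \<and> r \<noteq> [] \<and> sorted r \<and> e < last r"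
proof (induction y)
  case Nil
  then show ?case by simp
next
  case (Cons x y')
  show ?case
  proof (cases "sorted y'")
    case True
    then have ne: "y' \<noteq> []" using Cons.prems by auto
    then have "hd y' < x" using Cons.prems True sorted_cons_hd[OF True ne, of x] by auto
    then show ?thesis using ne by (intro exI[of _ "[x]"] exI[of _ "hd y'"] exI[of _ "tl y'"]) auto
  next
    case False
    then obtain r e z where rez: "y' = r @ e # z" "r \<noteq> []" "sorted r" "e < last r" using Cons.IH by blast
    show ?thesis
    proof (cases "x \<le> hd r")
      case True
      then show ?thesis using rez sorted_cons_hd[OF rez(3,2), of x]
        by (intro exI[of _ "x # r"] exI[of _ e] exI[of _ z]) auto
    next
      case False
      then show ?thesis using rez
        by (intro exI[of _ "[x]"] exI[of _ "hd r"] exI[of _ "tl r @ e # z"]) (cases r, auto)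
    qed
  qed
qed


definition flex :: "'a::linorder \<Rightarrow> 'a list \<Rightarrow> bool" where
  "flex a y \<longleftrightarrow> (\<exists>N. \<forall>p q p' q'. N \<le> p \<longrightarrow> N \<le> q \<longrightarrow> N \<le> p' \<longrightarrow> N \<le> q' \<longrightarrow> p + q = p' + q' \<longrightarrow>
      plx (replicate p a @ y @ replicate q a) (replicate p' a @ y @ replicate q' a))"

lemma flex_nil: "flex a []"
  unfolding flex_def
  by (intro exI[of _ 0]) (metis append_Nil replicate_add word_cong.wc_refl)

lemma flex_K:
  assumes key: "\<And>p q. 1 \<le> p \<Longrightarrow> 1 \<le> q \<Longrightarrow> plx (replicate p a @ y @ replicate q a) (replicate p a @ y' @ replicate q a)"
    and f: "flex a y'"
  shows "flex a y"
proof -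
  obtain N where N: "\<forall>p q p' q'. N \<le> p \<longrightarrow> N \<le> q \<longrightarrow> N \<le> p' \<longrightarrow> N \<le> q' \<longrightarrow> p + q = p' + q' \<longrightarrow>
      plx (replicate p a @ y' @ replicate q a) (replicate p' a @ y' @ replicate q' a)"
    using f unfolding flex_def by blast
  show ?thesis unfolding flex_def
  proof (intro exI[of _ "max N 1"] allI impI)
    fix p q p' q' assume h: "max N 1 \<le> p" "max N 1 \<le> q" "max N 1 \<le> p'" "max N 1 \<le> q'" "p + q = p' + q'"
    have "plx (replicate p a @ y @ replicate q a) (replicate p a @ y' @ replicate q a)" using key h by auto
    also have "plx (replicate p a @ y' @ replicate q a) (replicate p' a @ y' @ replicate q' a)" using N h by auto
    also have "plx (replicate p' a @ y' @ replicate q' a) (replicate p' a @ y @ replicate q' a)"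
      using key h by (auto intro: word_cong.wc_sym)
    finally show "plx (replicate p a @ y @ replicate q a) (replicate p' a @ y @ replicate q' a)" .
  qed
qed

lemma flex_small:
  assumes sa: "s < a" and f: "flex a y"
  shows "flex a (s # y)"
proof -
  have key: "plx (replicate p a @ (s # y) @ R) ([a,s] @ (replicate (p - 1) a @ y @ R))" if p1: "1 \<le> p" for p R
  proof -
    obtain p0 where p: "p = Suc p0" using p1 by (cases p) auto
    show ?thesis
      by (rule plx_eqI[OF wc_suf[OF Lpow[OF sa, of p0], of "y @ R"]]) (simp_all add: p)
  qed
  obtain N where N: "\<forall>p q p' q'. N \<le> p \<longrightarrow> N \<le> q \<longrightarrow> N \<le> p' \<longrightarrow> N \<le> q' \<longrightarrow> p + q = p' + q' \<longrightarrow>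
      plx (replicate p a @ y @ replicate q a) (replicate p' a @ y @ replicate q' a)"
    using f unfolding flex_def by blast
  show ?thesis unfolding flex_def
  proof (intro exI[of _ "Suc N"] allI impI)
    fix p q p' q' assume h: "Suc N \<le> p" "Suc N \<le> q" "Suc N \<le> p'" "Suc N \<le> q'" "p + q = p' + q'"
    have "plx (replicate p a @ (s # y) @ replicate q a) ([a,s] @ (replicate (p - 1) a @ y @ replicate q a))"
      using key h by auto
    also have "plx ([a,s] @ (replicate (p - 1) a @ y @ replicate q a)) ([a,s] @ (replicate (p' - 1) a @ y @ replicate q' a))"
      using N h by (intro wc_pre) auto
    also have "plx ([a,s] @ (replicate (p' - 1) a @ y @ replicate q' a)) (replicate p' a @ (s # y) @ replicate q' a)"
      using key h by (auto intro: word_cong.wc_sym)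
    finally show "plx (replicate p a @ (s # y) @ replicate q a) (replicate p' a @ (s # y) @ replicate q' a)" .
  qed
qed

lemma flex_big:
  assumes ab: "a < b" and f: "flex a y"
  shows "flex a (y @ [b])"
proof -
  have key: "plx (L @ (y @ [b]) @ replicate q a) ((L @ y @ replicate (q - 1) a) @ [b,a])" if q1: "1 \<le> q" for q L
  proof -
    obtain q0 where q: "q = Suc q0" using q1 by (cases q) auto
    show ?thesis
      by (rule plx_eqI[OF wc_pre[OF Lpow'[OF ab, of q0], of "L @ y"]]) (simp_all add: q)
  qed
  obtain N where N: "\<forall>p q p' q'. N \<le> p \<longrightarrow> N \<le> q \<longrightarrow> N \<le> p' \<longrightarrow> N \<le> q' \<longrightarrow> p + q = p' + q' \<longrightarrow>
      plx (replicate p a @ y @ replicate q a) (replicate p' a @ y @ replicate q' a)"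
    using f unfolding flex_def by blast
  show ?thesis unfolding flex_def
  proof (intro exI[of _ "Suc N"] allI impI)
    fix p q p' q' assume h: "Suc N \<le> p" "Suc N \<le> q" "Suc N \<le> p'" "Suc N \<le> q'" "p + q = p' + q'"
    have "plx (replicate p a @ (y @ [b]) @ replicate q a) ((replicate p a @ y @ replicate (q - 1) a) @ [b,a])"
      using key h by auto
    also have "plx ((replicate p a @ y @ replicate (q - 1) a) @ [b,a]) ((replicate p' a @ y @ replicate (q' - 1) a) @ [b,a])"
      using N h by (intro wc_suf) auto
    also have "plx ((replicate p' a @ y @ replicate (q' - 1) a) @ [b,a]) (replicate p' a @ (y @ [b]) @ replicate q' a)"
      using key h by (auto intro: word_cong.wc_sym)
    finally show "plx (replicate p a @ (y @ [b]) @ replicate q a) (replicate p' a @ (y @ [b]) @ replicate q' a)" .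
  qed
qed

lemma flex_jump:
  assumes t: "t \<noteq> []" and ah: "a \<le> hd t" and hc: "hd t < c" and f: "flex a t"
  shows "flex a (c # t)"
proof -
  have key: "plx (replicate p a @ (c # t) @ R) (c # (replicate p a @ t @ R))" for p R
  proof -
    have so: "sorted (replicate p a @ [hd t])" using ah by (simp add: sorted_append)
    show ?thesis
      by (rule plx_eqI[OF wc_suf[OF Ljump[OF so hc], of "tl t @ R"]]) (use t in simp_all)
  qed
  obtain N where N: "\<forall>p q p' q'. N \<le> p \<longrightarrow> N \<le> q \<longrightarrow> N \<le> p' \<longrightarrow> N \<le> q' \<longrightarrow> p + q = p' + q' \<longrightarrow>
      plx (replicate p a @ t @ replicate q a) (replicate p' a @ t @ replicate q' a)"
    using f unfolding flex_def by blast
  show ?thesis unfolding flex_def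
  proof (intro exI[of _ N] allI impI)
    fix p q p' q' assume h: "N \<le> p" "N \<le> q" "N \<le> p'" "N \<le> q'" "p + q = p' + q'"
    have "plx (replicate p a @ (c # t) @ replicate q a) (c # (replicate p a @ t @ replicate q a))"
      using key by auto
    also have "plx (c # (replicate p a @ t @ replicate q a)) (c # (replicate p' a @ t @ replicate q' a))"
      using N h by (intro wc_cons) auto
    also have "plx (c # (replicate p' a @ t @ replicate q' a)) (replicate p' a @ (c # t) @ replicate q' a)"
      using key by (auto intro: word_cong.wc_sym)
    finally show "plx (replicate p a @ (c # t) @ replicate q a) (replicate p' a @ (c # t) @ replicate q' a)" .
  qed
qed

lemma flex_all: "a \<notin> set y \<Longrightarrow> flex a y"
proof (induction "length y" arbitrary: y rule: less_induct)
  case less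
  show ?case
  proof (cases "sorted y")
    case True
    show ?thesis
    proof (cases y)
      case Nil
      then show ?thesis by (simp add: flex_nil)
    next
      case (Cons s y')
      show ?thesis
      proof (cases "s < a")
        case True
        then show ?thesis using flex_small less Cons by auto
      next
        case False
        then have sa: "a < s" using less.prems Cons by auto
        have "\<forall>x\<in>set y. s \<le> x" using \<open>sorted y\<close> Cons by auto
        moreover have "last y \<in> set y" using Cons by simp
        ultimately have la: "a < last y" using sa Cons by fastforce
        have "length (butlast y) < length y" "a \<notin> set (butlast y)" using less.prems Cons by (auto dest: in_set_butlastD)
        then have "flex a (butlast y)" using less.hyps by blast
        then have "flex a (butlast y @ [last y])" by (rule flex_big[OF la])
        moreover have "butlast y @ [last y] = y" using Cons by simp
        ultimately show ?thesis by simp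
      qed
    qed
  next
    case False
    obtain r e z where rez: "y = r @ e # z" "r \<noteq> []" "sorted r" "e < last r"
      using Lunsorted[OF False] by blast
    obtain b w where bw: "plx (r @ [e]) (b # w)" "w \<noteq> []" "hd w < b"
      using LBump[OF rez(3,2,4)] by blast
    define y2 where "y2 = b # w @ z"
    have py: "plx y y2" unfolding y2_def using wc_suf[OF bw(1), of z] rez(1) by simp
    have ms: "mset y = mset y2" using plx_mset[OF py] .
    have na: "a \<notin> set y2" using ms less.prems by (metis set_mset_mset)
    have len: "length (w @ z) < length y" using ms unfolding y2_def
      by (metis impossible_Cons le_refl length_Cons less_Suc_eq_le mset_eq_length nat_le_linear)
    have red: "flex a y2 \<Longrightarrow> flex a y"
      by (rule flex_K[of a y y2]) (use wc_context[OF py] in auto)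
    have IHwz: "flex a (w @ z)" using less.hyps[OF len] na unfolding y2_def by auto
    have ba: "b \<noteq> a" using na unfolding y2_def by auto
    show ?thesis
    proof (cases "b < a")
      case True
      then show ?thesis using red flex_small[OF True IHwz] unfolding y2_def by simp
    next
      case False
      then have ab: "a < b" using ba by simp
      obtain h w' where hw: "w = h # w'" using bw(2) by (cases w) auto
      have ha: "h \<noteq> a" using na hw unfolding y2_def by auto
      have hb: "h < b" using bw(3) hw by simp
      show ?thesis
      proof (cases "a < h")
        case True
        have "flex a (b # (w @ z))"
          by (rule flex_jump[OF _ _ _ IHwz]) (use hw True hb in auto)
        then show ?thesis using red unfolding y2_def by simp
      next
        case False
        then have hla: "h < a" using ha by simp
        have len2: "length (b # w' @ z) < length y" using len hw by simp
        have "flex a (b # w' @ z)" using less.hyps[OF len2] na hw unfolding y2_def by auto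
        then have f3: "flex a (h # b # w' @ z)" by (rule flex_small[OF hla])
        have "flex a y2"
        proof (rule flex_K[OF _ f3])
          fix p q :: nat assume "1 \<le> p" "1 \<le> q"
          then obtain p0 where p: "p = Suc p0" by (cases p) auto
          show "plx (replicate p a @ y2 @ replicate q a) (replicate p a @ (h # b # w' @ z) @ replicate q a)"
            by (rule plx_eqI[OF wc_context[OF word_cong.wc_sym[OF L2[OF hla, of b]], of "replicate p0 a" "w' @ z @ replicate q a"]])
               (use ab in \<open>simp_all add: p y2_def hw replicate_app_Cons_same\<close>)
        qed
        then show ?thesis using red by simp
      qed
    qed
  qed
qed


abbreviation Sg :: "('a::linorder \<Rightarrow> nat) \<Rightarrow> 'a list \<Rightarrow> 'a list \<Rightarrow> bool" where
  "Sg \<sigma> \<equiv> word_cong (knuth_rels \<union> power_rels \<sigma>)"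

lemma plx_S: "plx u v \<Longrightarrow> Sg \<sigma> u v"
  by (erule wc_mono) auto

lemma S_pump1:
  assumes "1 \<le> m" "1 \<le> \<sigma> c"
  shows "Sg \<sigma> (replicate m c) (replicate (m + (\<sigma> c - 1)) c)"
proof -
  obtain m0 where m: "m = Suc m0" using assms by (cases m) auto
  have "Sg \<sigma> [c] (replicate (\<sigma> c) c)"
    by (rule word_cong.wc_sym, rule wc_rel1) (auto simp: power_rels_def)
  from wc_pre[OF this, of "replicate m0 c"] show ?thesis
    by (rule plx_eqI) (use assms in \<open>simp_all add: m replicate_append_same replicate_add[symmetric]\<close>)
qed

lemma S_pump:
  assumes "1 \<le> m" "1 \<le> \<sigma> c"
  shows "Sg \<sigma> (replicate m c) (replicate (m + t * (\<sigma> c - 1)) c)"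
proof (induction t)
  case 0
  then show ?case by (simp add: word_cong.wc_refl)
next
  case (Suc t)
  have "Sg \<sigma> (replicate (m + t * (\<sigma> c - 1)) c) (replicate (m + t * (\<sigma> c - 1) + (\<sigma> c - 1)) c)"
    using S_pump1[of "m + t * (\<sigma> c - 1)" \<sigma> c] assms by simp
  then show ?case using Suc.IH
    by (metis (no_types, lifting) add.assoc add.commute mult_Suc word_cong.wc_trans)
qed

lemma S_move:
  assumes cY: "c \<notin> set Y" and h: "1 \<le> n" "1 \<le> m" "1 \<le> n'" "1 \<le> m'" "n + m = n' + m'" and sc: "2 \<le> \<sigma> c"
  shows "Sg \<sigma> (replicate n c @ Y @ replicate m c) (replicate n' c @ Y @ replicate m' c)"
proof -
  obtain N where N: "\<forall>p q p' q'. N \<le> p \<longrightarrow> N \<le> q \<longrightarrow> N \<le> p' \<longrightarrow> N \<le> q' \<longrightarrow> p + q = p' + q' \<longrightarrow>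
      plx (replicate p c @ Y @ replicate q c) (replicate p' c @ Y @ replicate q' c)"
    using flex_all[OF cY] unfolding flex_def by blast
  define T where "T = N * (\<sigma> c - 1)"
  have TN: "N \<le> T"
  proof -
    have "1 \<le> \<sigma> c - 1" using sc by linarith
    then show ?thesis unfolding T_def using mult_le_mono2[of 1 "\<sigma> c - 1" N] by simp
  qed
  have s1: "1 \<le> \<sigma> c" using sc by simp
  have A: "Sg \<sigma> (replicate k c @ Y @ replicate l c) (replicate (k + T) c @ Y @ replicate (l + T) c)"
    if "1 \<le> k" "1 \<le> l" for k l
  proof -
    have "Sg \<sigma> (replicate k c @ Y @ replicate l c) (replicate (k + T) c @ Y @ replicate l c)"
      using wc_suf[OF S_pump[where m=k and \<sigma>=\<sigma> and c=c and t=N, OF that(1) s1]] unfolding T_def by simp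
    moreover have "Sg \<sigma> (replicate (k + T) c @ Y @ replicate l c) (replicate (k + T) c @ Y @ replicate (l + T) c)"
      using wc_pre[OF S_pump[where m=l and \<sigma>=\<sigma> and c=c and t=N, OF that(2) s1], of "replicate (k + T) c @ Y"] unfolding T_def by simp
    ultimately show ?thesis by (rule word_cong.wc_trans)
  qed
  have "Sg \<sigma> (replicate n c @ Y @ replicate m c) (replicate (n + T) c @ Y @ replicate (m + T) c)"
    using A h by simp
  moreover have "Sg \<sigma> (replicate (n + T) c @ Y @ replicate (m + T) c) (replicate (n' + T) c @ Y @ replicate (m' + T) c)"
    using N TN h by (intro plx_S) auto
  moreover have "Sg \<sigma> (replicate (n' + T) c @ Y @ replicate (m' + T) c) (replicate n' c @ Y @ replicate m' c)"
    using A[of n' m'] h by (simp add: word_cong.wc_sym)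
  ultimately show ?thesis by (meson word_cong.wc_trans)
qed

inductive ovr :: "'a list \<Rightarrow> 'a list \<Rightarrow> bool" where
  ovr_nil: "ovr [] []"
| ovr_cons: "1 \<le> n \<Longrightarrow> ovr U u \<Longrightarrow> ovr (replicate n c @ U) (c # u)"

lemma ovr_refl: "ovr u u"
proof (induction u)
  case Nil
  then show ?case by (rule ovr_nil)
next
  case (Cons a u)
  then show ?case using ovr_cons[of 1 u u a] by simp
qed

lemma ovr_append: "ovr U u \<Longrightarrow> ovr W w \<Longrightarrow> ovr (U @ W) (u @ w)"
  by (induction rule: ovr.induct) (auto intro: ovr.intros)

lemma ovr_cons_inv: "ovr U (c # u) \<Longrightarrow> \<exists>n U'. 1 \<le> n \<and> U = replicate n c @ U' \<and> ovr U' u"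
  by (erule ovr.cases) auto

lemma ovr_nil_inv: "ovr U [] \<Longrightarrow> U = []"
  by (erule ovr.cases) auto

lemma ovr_split: "ovr U (x @ y) \<Longrightarrow> \<exists>X Y. U = X @ Y \<and> ovr X x \<and> ovr Y y"
proof (induction x arbitrary: U)
  case Nil
  then show ?case by (auto intro: ovr.intros)
next
  case (Cons c x)
  then obtain n U' where "1 \<le> n" "U = replicate n c @ U'" "ovr U' (x @ y)"
    using ovr_cons_inv[of U c "x @ y"] by auto
  then show ?case using Cons.IH by (metis append.assoc ovr.ovr_cons)
qed

lemma ovr_set: "ovr U u \<Longrightarrow> set U = set u"
  by (induction rule: ovr.induct) auto


lemma mod_cancel_add: "(x + k) mod m = (y + k) mod m \<Longrightarrow> x mod m = (y::nat) mod m"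
  by (simp add: nat_mod_eq_iff)

lemma transport:
  assumes "ovr V v" "\<forall>a. count (mset V) a mod (\<sigma> a - 1) = count (mset v) a mod (\<sigma> a - 1)"
    and s2: "\<forall>a. 2 \<le> \<sigma> a"
  shows "Sg \<sigma> V v"
  using assms(1,2)
proof (induction v arbitrary: V rule: list.induct)
  case Nil
  then show ?case using ovr_nil_inv by (auto intro: word_cong.wc_refl)
next
  case (Cons c v')
  obtain n V' where nV: "1 \<le> n" "V = replicate n c @ V'" "ovr V' v'"
    using ovr_cons_inv[OF Cons.prems(1)] by blast
  have s1: "1 \<le> \<sigma> c" using s2 by (metis one_le_numeral order_trans)
  show ?case
  proof (cases "c \<in> set v'")
    case False
    have cV': "c \<notin> set V'" using ovr_set[OF nV(3)] False by simp
    have h0: "count (mset V) c mod (\<sigma> c - 1) = count (mset (c # v')) c mod (\<sigma> c - 1)"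
      using Cons.prems(2) by blast
    have e1: "count (mset V) c = n"
    proof -
      have "count (mset V') c = 0" using cV' by (simp add: count_mset_0_iff)
      then show ?thesis using nV(2) by simp
    qed
    have e2: "count (mset (c # v')) c = 1"
    proof -
      have "count (mset v') c = 0" using False by (simp add: count_mset_0_iff)
      then show ?thesis by simp
    qed
    from h0 have "n mod (\<sigma> c - 1) = 1 mod (\<sigma> c - 1)" by (simp only: e1 e2)
    then have "(\<sigma> c - 1) dvd (n - 1)" using nV(1) mod_eq_dvd_iff_nat[of 1 n "\<sigma> c - 1"] by simp
    then obtain t where t: "n - 1 = (\<sigma> c - 1) * t" by blast
    have "Sg \<sigma> (replicate 1 c) (replicate (1 + t * (\<sigma> c - 1)) c)"
      using S_pump[where m=1 and \<sigma>=\<sigma> and c=c and t=t] s1 by simp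
    moreover have "1 + t * (\<sigma> c - 1) = n" using t nV(1) by (simp add: mult.commute)
    ultimately have A: "Sg \<sigma> (replicate n c) [c]"
      by (metis replicate_Suc replicate_0 word_cong.wc_sym One_nat_def)
    have "\<forall>a. count (mset V') a mod (\<sigma> a - 1) = count (mset v') a mod (\<sigma> a - 1)"
    proof
      fix a
      show "count (mset V') a mod (\<sigma> a - 1) = count (mset v') a mod (\<sigma> a - 1)"
      proof (cases "a = c")
        case True
        then show ?thesis using cV' False by (metis count_mset_0_iff)
      next
        case False
        have "count (mset V) a mod (\<sigma> a - 1) = count (mset (c # v')) a mod (\<sigma> a - 1)"
          using Cons.prems(2) by blast
        then show ?thesis using False nV(2) by simp
      qed
    qed
    then have B: "Sg \<sigma> V' v'" using Cons.IH nV(3) by blast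
    have "Sg \<sigma> (replicate n c @ V') ([c] @ V')" using wc_suf[OF A] .
    moreover have "Sg \<sigma> ([c] @ V') ([c] @ v')" using wc_pre[OF B] .
    ultimately show ?thesis using nV(2) by (simp add: word_cong.wc_trans)
  next
    case True
    obtain y z where yz: "v' = y @ c # z" "c \<notin> set y" using split_list_first[OF True] by blast
    obtain Y W where YW: "V' = Y @ W" "ovr Y y" "ovr W (c # z)" using ovr_split[of V' y "c # z"] nV(3) yz(1) by blast
    obtain m Z where mZ: "1 \<le> m" "W = replicate m c @ Z" "ovr Z z" using ovr_cons_inv[OF YW(3)] by blast
    have cY: "c \<notin> set Y" using ovr_set[OF YW(2)] yz(2) by simp
    define V'' where "V'' = Y @ replicate (m + n - 1) c @ Z"
    have oV'': "ovr V'' v'" unfolding V''_def yz(1)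
      by (rule ovr_append[OF YW(2)], rule ovr_cons[OF _ mZ(3)]) (use mZ(1) nV(1) in simp)
    have "Sg \<sigma> ((replicate n c @ Y @ replicate m c) @ Z) ((replicate 1 c @ Y @ replicate (m + n - 1) c) @ Z)"
      by (rule wc_suf, rule S_move[OF cY]) (use nV(1) mZ(1) s2 in auto)
    then have A: "Sg \<sigma> V (c # V'')" unfolding V''_def using nV(2) YW(1) mZ(2) by simp
    have cnt: "count (mset V) a = count (mset V'') a + (if a = c then 1 else 0)" for a
      unfolding V''_def using nV(2) YW(1) mZ(2) nV(1) mZ(1) by auto
    have "\<forall>a. count (mset V'') a mod (\<sigma> a - 1) = count (mset v') a mod (\<sigma> a - 1)"
    proof
      fix a
      have "(count (mset V'') a + (if a = c then 1 else 0)) mod (\<sigma> a - 1) = (count (mset v') a + (if a = c then 1 else 0)) mod (\<sigma> a - 1)"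
      proof -
        have h: "count (mset V) a mod (\<sigma> a - 1) = count (mset (c # v')) a mod (\<sigma> a - 1)"
          using Cons.prems(2) by blast
        have e: "count (mset (c # v')) a = count (mset v') a + (if a = c then 1 else 0)" by simp
        from h show ?thesis by (simp only: cnt[of a] e)
      qed
      then show "count (mset V'') a mod (\<sigma> a - 1) = count (mset v') a mod (\<sigma> a - 1)"
        by (rule mod_cancel_add)
    qed
    then have B: "Sg \<sigma> V'' v'" using Cons.IH oV'' by blast
    show ?thesis using A wc_cons[OF B, of c] by (rule word_cong.wc_trans)
  qed
qed



lemma ovr1: "ovr U [x] \<Longrightarrow> \<exists>i. 1 \<le> i \<and> U = replicate i x"
  by (fastforce dest!: ovr_cons_inv ovr_nil_inv)
lemma ovr2: "ovr U [x,y] \<Longrightarrow> \<exists>i j. 1 \<le> i \<and> 1 \<le> j \<and> U = replicate i x @ replicate j y"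
  by (fastforce dest!: ovr_cons_inv ovr_nil_inv)
lemma ovr3: "ovr U [x,y,z] \<Longrightarrow> \<exists>i j k. 1 \<le> i \<and> 1 \<le> j \<and> 1 \<le> k \<and> U = replicate i x @ replicate j y @ replicate k z"
  by (fastforce dest!: ovr_cons_inv ovr_nil_inv)
lemma ovr1I: "1 \<le> i \<Longrightarrow> ovr (replicate i x) [x]"
  using ovr_cons[OF _ ovr_nil, of i x] by simp
lemma ovr2I: assumes "1 \<le> i" "1 \<le> j" shows "ovr (replicate i x @ replicate j y) [x,y]"
proof -
  have "ovr (replicate j y @ []) [y]" using ovr_cons[OF assms(2) ovr_nil] .
  then have "ovr (replicate i x @ (replicate j y @ [])) [x, y]" using ovr_cons[OF assms(1), where c=x] by simp
  then show ?thesis by simp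
qed
lemma ovr3I: assumes "1 \<le> i" "1 \<le> j" "1 \<le> k" shows "ovr (replicate i x @ replicate j y @ replicate k z) [x,y,z]"
proof -
  have "ovr (replicate k z @ []) [z]" using ovr_cons[OF assms(3) ovr_nil] .
  then have "ovr (replicate j y @ (replicate k z @ [])) [y, z]" using ovr_cons[OF assms(2), where c=y] by simp
  then have "ovr (replicate i x @ (replicate j y @ (replicate k z @ []))) [x, y, z]" using ovr_cons[OF assms(1), where c=x] by simp
  then show ?thesis by simp
qed

lemma pump_ge:
  assumes "2 \<le> (s::nat)" shows "j \<le> k + j * (s - 1)"
proof -
  have "1 \<le> s - 1" using assms by linarith
  then have "j * 1 \<le> j * (s - 1)" by (rule mult_le_mono2)
  then have "j \<le> j * (s - 1)" by simp
  then show ?thesis by (rule trans_le_add2)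
qed

lemma local_step:
  assumes s2: "\<forall>a. 2 \<le> \<sigma> a" and R: "(u0, v0) \<in> knuth_rels \<union> power_rels (\<lambda>_. 2)"
  shows "(\<forall>U. ovr U u0 \<longrightarrow> (\<exists>V. ovr V v0 \<and> Sg \<sigma> U V)) \<and> (\<forall>U. ovr U v0 \<longrightarrow> (\<exists>V. ovr V u0 \<and> Sg \<sigma> U V))"
proof -
  have s1: "\<And>a. 1 \<le> \<sigma> a" using s2 by (meson le_trans one_le_numeral)
  consider (K1) a b c where "u0 = [a,c,b]" "v0 = [c,a,b]" "a \<le> b" "b < c"
    | (K2) a b c where "u0 = [b,a,c]" "v0 = [b,c,a]" "a < b" "b \<le> c"
    | (P) a where "u0 = [a,a]" "v0 = [a]"
  proof -
    have "(\<exists>a b c. u0 = [a,c,b] \<and> v0 = [c,a,b] \<and> a \<le> b \<and> b < c) \<or> (\<exists>a b c. u0 = [b,a,c] \<and> v0 = [b,c,a] \<and> a < b \<and> b \<le> c) \<or> (\<exists>a. u0 = [a,a] \<and> v0 = [a])"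
      using R unfolding knuth_rels_def power_rels_def by (simp add: numeral_2_eq_2)
    then show thesis using that by blast
  qed
  then show ?thesis
  proof cases
    case (K1 a b c)
    have key: "Sg \<sigma> (replicate i a @ replicate j c @ replicate k b) (replicate j c @ replicate i a @ replicate (k + j * (\<sigma> b - 1)) b)"
      "Sg \<sigma> (replicate j c @ replicate i a @ replicate k b) (replicate i a @ replicate j c @ replicate (k + j * (\<sigma> b - 1)) b)"
      if "1 \<le> k" for i j k
    proof -
      have jk: "j \<le> k + j * (\<sigma> b - 1)" using pump_ge[of "\<sigma> b" j k] s2 by simp
      have lp: "plx (replicate i a @ replicate j c @ replicate (k + j * (\<sigma> b - 1)) b) (replicate j c @ replicate i a @ replicate (k + j * (\<sigma> b - 1)) b)"
        by (rule LP1) (use K1 jk in \<open>simp_all add: sorted_replicate\<close>)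
      have pa: "Sg \<sigma> (X @ Y @ replicate k b) (X @ Y @ replicate (k + j * (\<sigma> b - 1)) b)" for X Y
        using wc_pre[OF S_pump[where m=k and \<sigma>=\<sigma> and c=b and t=j, OF that s1], of "X @ Y"] by simp
      show "Sg \<sigma> (replicate i a @ replicate j c @ replicate k b) (replicate j c @ replicate i a @ replicate (k + j * (\<sigma> b - 1)) b)"
        using word_cong.wc_trans[OF pa[of "replicate i a" "replicate j c"] plx_S[OF lp, of \<sigma>]] by simp
      show "Sg \<sigma> (replicate j c @ replicate i a @ replicate k b) (replicate i a @ replicate j c @ replicate (k + j * (\<sigma> b - 1)) b)"
        using word_cong.wc_trans[OF pa[of "replicate j c" "replicate i a"] plx_S[OF word_cong.wc_sym[OF lp], of \<sigma>]] by simp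
    qed
    show ?thesis
    proof (intro conjI allI impI)
      fix U assume "ovr U u0"
      then have "ovr U [a,c,b]" using K1 by simp
      from ovr3[OF this] obtain i j k where ijk: "1 \<le> i" "1 \<le> j" "1 \<le> k" "U = replicate i a @ replicate j c @ replicate k b"
        by blast
      have o: "ovr (replicate j c @ replicate i a @ replicate (k + j * (\<sigma> b - 1)) b) v0"
        unfolding K1(2) by (rule ovr3I) (use ijk in simp_all)
      show "\<exists>V. ovr V v0 \<and> Sg \<sigma> U V"
        by (rule exI[of _ "replicate j c @ replicate i a @ replicate (k + j * (\<sigma> b - 1)) b"])
           (simp only: o key(1)[OF ijk(3)] ijk(4) simp_thms)
    next
      fix U assume "ovr U v0"
      then have "ovr U [c,a,b]" using K1 by simp
      from ovr3[OF this] obtain i j k where ijk: "1 \<le> j" "1 \<le> i" "1 \<le> k" "U = replicate j c @ replicate i a @ replicate k b"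
        by blast
      have o: "ovr (replicate i a @ replicate j c @ replicate (k + j * (\<sigma> b - 1)) b) u0"
        unfolding K1(1) by (rule ovr3I) (use ijk in simp_all)
      show "\<exists>V. ovr V u0 \<and> Sg \<sigma> U V"
        by (rule exI[of _ "replicate i a @ replicate j c @ replicate (k + j * (\<sigma> b - 1)) b"])
           (simp only: o key(2)[OF ijk(3)] ijk(4) simp_thms)
    qed
  next
    case (K2 a b c)
    have key: "Sg \<sigma> (replicate i b @ replicate j a @ replicate k c) (replicate (i + j * (\<sigma> b - 1)) b @ replicate k c @ replicate j a)"
      "Sg \<sigma> (replicate i b @ replicate k c @ replicate j a) (replicate (i + j * (\<sigma> b - 1)) b @ replicate j a @ replicate k c)"
      if "1 \<le> i" for i j k
    proof -
      have ji: "j \<le> i + j * (\<sigma> b - 1)" using pump_ge[of "\<sigma> b" j i] s2 by simp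
      have lp: "plx (replicate (i + j * (\<sigma> b - 1)) b @ replicate k c @ replicate j a) (replicate (i + j * (\<sigma> b - 1)) b @ replicate j a @ replicate k c)"
        by (rule LP2) (use K2 ji in simp_all)
      have pa: "Sg \<sigma> (replicate i b @ X) (replicate (i + j * (\<sigma> b - 1)) b @ X)" for X
        using wc_suf[OF S_pump[where m=i and \<sigma>=\<sigma> and c=b and t=j, OF that s1]] .
      show "Sg \<sigma> (replicate i b @ replicate j a @ replicate k c) (replicate (i + j * (\<sigma> b - 1)) b @ replicate k c @ replicate j a)"
        using word_cong.wc_trans[OF pa[of "replicate j a @ replicate k c"] plx_S[OF word_cong.wc_sym[OF lp], of \<sigma>]] by simp
      show "Sg \<sigma> (replicate i b @ replicate k c @ replicate j a) (replicate (i + j * (\<sigma> b - 1)) b @ replicate j a @ replicate k c)"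
        using word_cong.wc_trans[OF pa[of "replicate k c @ replicate j a"] plx_S[OF lp, of \<sigma>]] by simp
    qed
    show ?thesis
    proof (intro conjI allI impI)
      fix U assume "ovr U u0"
      then have "ovr U [b,a,c]" using K2 by simp
      from ovr3[OF this] obtain i j k where ijk: "1 \<le> i" "1 \<le> j" "1 \<le> k" "U = replicate i b @ replicate j a @ replicate k c"
        by blast
      have o: "ovr (replicate (i + j * (\<sigma> b - 1)) b @ replicate k c @ replicate j a) v0"
        unfolding K2(2) by (rule ovr3I) (use ijk in simp_all)
      show "\<exists>V. ovr V v0 \<and> Sg \<sigma> U V"
        by (rule exI[of _ "replicate (i + j * (\<sigma> b - 1)) b @ replicate k c @ replicate j a"])
           (simp only: o key(1)[OF ijk(1)] ijk(4) simp_thms)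
    next
      fix U assume "ovr U v0"
      then have "ovr U [b,c,a]" using K2 by simp
      from ovr3[OF this] obtain i j k where ijk: "1 \<le> i" "1 \<le> k" "1 \<le> j" "U = replicate i b @ replicate k c @ replicate j a"
        by blast
      have o: "ovr (replicate (i + j * (\<sigma> b - 1)) b @ replicate j a @ replicate k c) u0"
        unfolding K2(1) by (rule ovr3I) (use ijk in simp_all)
      show "\<exists>V. ovr V u0 \<and> Sg \<sigma> U V"
        by (rule exI[of _ "replicate (i + j * (\<sigma> b - 1)) b @ replicate j a @ replicate k c"])
           (simp only: o key(2)[OF ijk(1)] ijk(4) simp_thms)
    qed
  next
    case (P a)
    show ?thesis
    proof (intro conjI allI impI)
      fix U assume "ovr U u0"
      then have "ovr U [a,a]" using P by simp
      from ovr2[OF this] obtain i j where ij: "1 \<le> i" "1 \<le> j" "U = replicate i a @ replicate j a"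
        by blast
      have "ovr (replicate (i + j) a) v0" using P ij by (auto intro!: ovr1I)
      moreover have "Sg \<sigma> U (replicate (i + j) a)" using ij by (simp add: replicate_add word_cong.wc_refl)
      ultimately show "\<exists>V. ovr V v0 \<and> Sg \<sigma> U V" by blast
    next
      fix U assume "ovr U v0"
      then have "ovr U [a]" using P by simp
      from ovr1[OF this] obtain i where i: "1 \<le> i" "U = replicate i a" by blast
      have "Sg \<sigma> (replicate i a) (replicate (i + 1 * (\<sigma> a - 1)) a)"
        using S_pump[where m=i and \<sigma>=\<sigma> and c=a and t=1, OF i(1) s1] .
      moreover have "replicate (i + 1 * (\<sigma> a - 1)) a = replicate (i + \<sigma> a - 2) a @ replicate 1 a"
      proof -
        have "2 \<le> \<sigma> a" using s2 by blast
        then have "i + 1 * (\<sigma> a - 1) = (i + \<sigma> a - 2) + 1" using i(1) by linarith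
        then show ?thesis by (metis replicate_add)
      qed
      moreover have "ovr (replicate (i + \<sigma> a - 2) a @ replicate 1 a) u0"
      proof -
        have "2 \<le> \<sigma> a" using s2 by blast
        then have "1 \<le> i + \<sigma> a - 2" using i(1) by linarith
        then show ?thesis using P ovr2I[of "i + \<sigma> a - 2" 1 a a] by simp
      qed
      ultimately show "\<exists>V. ovr V u0 \<and> Sg \<sigma> U V" using i by auto
    qed
  qed
qed


lemma claim1:
  fixes \<sigma> :: "'a::linorder \<Rightarrow> nat"
  assumes s2: "\<forall>a. 2 \<le> \<sigma> a" and h: "word_cong (knuth_rels \<union> power_rels (\<lambda>_. 2)) u v"
  shows "(\<forall>U. ovr U u \<longrightarrow> (\<exists>V. ovr V v \<and> Sg \<sigma> U V)) \<and> (\<forall>U. ovr U v \<longrightarrow> (\<exists>V. ovr V u \<and> Sg \<sigma> U V))"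
  using h
proof (induction rule: word_cong.induct)
  case (wc_rel u0 v0 x y)
  have L: "(\<forall>U. ovr U u0 \<longrightarrow> (\<exists>V. ovr V v0 \<and> Sg \<sigma> U V)) \<and> (\<forall>U. ovr U v0 \<longrightarrow> (\<exists>V. ovr V u0 \<and> Sg \<sigma> U V))"
    by (rule local_step[OF s2 wc_rel])
  have gen: "\<exists>V. ovr V (x @ b0 @ y) \<and> Sg \<sigma> U V"
    if ov: "ovr U (x @ a0 @ y)" and loc: "\<forall>U. ovr U a0 \<longrightarrow> (\<exists>V. ovr V b0 \<and> Sg \<sigma> U V)" for U a0 b0
  proof -
    obtain X U1 where XU: "U = X @ U1" "ovr X x" "ovr U1 (a0 @ y)" using ovr_split[OF ov] by blast
    obtain U0 Y where UY: "U1 = U0 @ Y" "ovr U0 a0" "ovr Y y" using ovr_split[OF XU(3)] by blast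
    obtain V0 where V0: "ovr V0 b0" "Sg \<sigma> U0 V0" using loc UY(2) by blast
    have "ovr (X @ V0 @ Y) (x @ b0 @ y)" using ovr_append[OF XU(2) ovr_append[OF V0(1) UY(3)]] .
    moreover have "Sg \<sigma> U (X @ V0 @ Y)" using wc_context[OF V0(2), of X Y] XU(1) UY(1) by simp
    ultimately show ?thesis by blast
  qed
  show ?case using gen L by blast
next
  case (wc_refl u)
  then show ?case by (auto intro: word_cong.wc_refl)
next
  case (wc_sym u v)
  then show ?case by blast
next
  case (wc_trans u v w)
  show ?case
  proof (intro conjI allI impI)
    fix U assume "ovr U u"
    then obtain V where "ovr V v" "Sg \<sigma> U V" using wc_trans.IH(1) by blast
    then obtain W where "ovr W w" "Sg \<sigma> V W" using wc_trans.IH(2) by blast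
    then show "\<exists>W. ovr W w \<and> Sg \<sigma> U W" using \<open>Sg \<sigma> U V\<close> word_cong.wc_trans by blast
  next
    fix U assume "ovr U w"
    then obtain V where "ovr V v" "Sg \<sigma> U V" using wc_trans.IH(2) by blast
    then obtain W where "ovr W u" "Sg \<sigma> V W" using wc_trans.IH(1) by blast
    then show "\<exists>W. ovr W u \<and> Sg \<sigma> U W" using \<open>Sg \<sigma> U V\<close> word_cong.wc_trans by blast
  qed
qed

lemma power_inv:
  fixes \<sigma> :: "'a \<Rightarrow> nat"
  assumes s2: "\<forall>a. 2 \<le> \<sigma> a" and "(l, r) \<in> power_rels \<sigma>"
  shows "count (mset l) a mod (\<sigma> a - 1) = count (mset r) a mod (\<sigma> a - 1)"
proof -
  obtain b where b: "l = replicate (\<sigma> b) b" "r = [b]" using assms(2) unfolding power_rels_def by blast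
  show ?thesis
  proof (cases "a = b")
    case True
    have "2 \<le> \<sigma> a" using s2 by blast
    then have "\<sigma> a = (\<sigma> a - 1) + 1" by simp
    then have "\<sigma> a mod (\<sigma> a - 1) = 1 mod (\<sigma> a - 1)" by (metis mod_add_self1)
    then show ?thesis using b True by simp
  next
    case False
    then show ?thesis using b by simp
  qed
qed

lemma Sg_inv:
  fixes \<sigma> :: "'a::linorder \<Rightarrow> nat"
  assumes s2: "\<forall>a. 2 \<le> \<sigma> a" and "Sg \<sigma> u v"
  shows "count (mset u) a mod (\<sigma> a - 1) = count (mset v) a mod (\<sigma> a - 1)"
  using assms(2)
proof (rule wc_count_mod)
  fix l r assume "(l, r) \<in> knuth_rels \<union> power_rels \<sigma>"
  then show "count (mset l) a mod (\<sigma> a - 1) = count (mset r) a mod (\<sigma> a - 1)"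
  proof
    assume "(l, r) \<in> knuth_rels"
    then have "mset l = mset r" unfolding knuth_rels_def by auto
    then show ?thesis by simp
  next
    assume "(l, r) \<in> power_rels \<sigma>"
    then show ?thesis by (rule power_inv[OF s2])
  qed
qed

lemma com_inv:
  fixes \<sigma> :: "'a \<Rightarrow> nat"
  assumes s2: "\<forall>a. 2 \<le> \<sigma> a" and "com_sigma_eq \<sigma> u v"
  shows "count (mset u) a mod (\<sigma> a - 1) = count (mset v) a mod (\<sigma> a - 1)"
  using assms(2) unfolding com_sigma_eq_def
proof (rule wc_count_mod)
  fix l r assume "(l, r) \<in> comm_rels \<union> power_rels \<sigma>"
  then show "count (mset l) a mod (\<sigma> a - 1) = count (mset r) a mod (\<sigma> a - 1)"
  proof
    assume "(l, r) \<in> comm_rels"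
    then have "mset l = mset r" unfolding comm_rels_def by auto
    then show ?thesis by simp
  next
    assume "(l, r) \<in> power_rels \<sigma>"
    then show ?thesis by (rule power_inv[OF s2])
  qed
qed

theorem mainTheorem1:
  fixes \<sigma> :: "'a::{linorder, finite} \<Rightarrow> nat"
  assumes "\<And>a. \<sigma> a \<ge> 2"
  shows "\<forall>u v :: 'a list.
           plax_sigma_eq (\<lambda>_. 2) u v \<and> com_sigma_eq \<sigma> u v \<longrightarrow> plax_sigma_eq \<sigma> u v"
proof (intro allI impI, elim conjE)
  fix u v :: "'a list"
  assume h2: "plax_sigma_eq (\<lambda>_. 2) u v" and hc: "com_sigma_eq \<sigma> u v"
  have s2: "\<forall>a. 2 \<le> \<sigma> a" using assms by blast
  have w2: "word_cong (knuth_rels \<union> power_rels (\<lambda>_. 2)) u v" using h2 unfolding plax_sigma_eq_def .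
  obtain V where V: "ovr V v" "Sg \<sigma> u V"
    using claim1[OF s2 w2] ovr_refl[of u] by blast
  have "\<forall>a. count (mset V) a mod (\<sigma> a - 1) = count (mset v) a mod (\<sigma> a - 1)"
  proof
    fix a
    have "count (mset u) a mod (\<sigma> a - 1) = count (mset V) a mod (\<sigma> a - 1)" by (rule Sg_inv[OF s2 V(2)])
    moreover have "count (mset u) a mod (\<sigma> a - 1) = count (mset v) a mod (\<sigma> a - 1)" by (rule com_inv[OF s2 hc])
    ultimately show "count (mset V) a mod (\<sigma> a - 1) = count (mset v) a mod (\<sigma> a - 1)" by simp
  qed
  then have "Sg \<sigma> V v" by (rule transport[OF V(1) _ s2])
  then have "Sg \<sigma> u v" using V(2) word_cong.wc_trans by blast
  then show "plax_sigma_eq \<sigma> u v" unfolding plax_sigma_eq_def .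
qed

end
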